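(* Let $(A,E,\varepsilon,\tau)$ be an analytical $B$-$B$-non-commutative probability space, let $(C_\ell,C_r)$ be a pair of $B$-algebras in $A$, let $X\in A_\ell$, and let $\eta:B\to B$ be completely positive. Fix $b_1,b_2\in B$ and define $\eta_{\ell,b_1,b_2}:B\to B$ by $\eta_{\ell,b_1,b_2}(b)=\eta(bb_2)b_1$. If $\xi=J_\ell(X:(C_\ell,C_r),\eta)$ exists and $\eta_{\ell,b_1,b_2}$ is completely positive, then $J_\ell(X:(C_\ell,C_r),\eta_{\ell,b_1,b_2})$ exists and equals $R_{b_1}L_{b_2}\xi$. Similarly, if $Y\in A_r$, $\eta_{r,b_1,b_2}(b)=b_2\eta(b_1b)$ is completely positive and $J_r(Y:(C_\ell,C_r),\eta)$ exists, then $J_r(Y:(C_\ell,C_r),\eta_{r,b_1,b_2})$ exists and equals $R_{b_1}L_{b_2}J_r(Y:(C_\ell,C_r),\eta)$.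
   Context: Let $B$ be a unital $*$-algebra. A $B$-$B$-non-commutative probability space is a triple $(A,E,\varepsilon)$: $A$ a unital $*$-algebra, $\varepsilon:B\otimes B^{\mathrm{op}}\to A$ a unital $*$-homomorphism injective on $B\otimes 1$ and on $1\otimes B^{\mathrm{op}}$, $E:A\to B$ unital linear with $E(\varepsilon(b_1\otimes b_2)a)=b_1E(a)b_2$, $E(a\varepsilon(b\otimes 1))=E(a\varepsilon(1\otimes b))$. Write $L_b=\varepsilon(b\otimes1)$, $R_b=\varepsilon(1\otimes b)$, $B_\ell=\{L_b\}$, $B_r=\{R_b\}$, $A_\ell$ = commutant of $B_r$, $A_r$ = commutant of $B_\ell$. It is analytical, $(A,E,\varepsilon,\tau)$, if $\tau$ is a state with $\tau(a)=\tau(L_{E(a)})=\tau(R_{E(a)})$, $\tau_B(b)=\tau(L_b)$ is tracial, left multiplication by elements of $A$ is bounded on $A/N_\tau$ and extends to bounded operators on $L_2(A,\tau)$, and $E$ is completely positive on $A_\ell$ and $A_r$; $\tau(a\xi):=\langle a\xi,1\rangle$ for $\xi\in L_2(A,\tau)$. A pair of $B$-algebras: unital subalgebras $B_\ell\subseteq C_\ell\subseteq A_\ell$, $B_r\subseteq C_r\subseteq A_r$. For $X\in A_\ell$ and completely positive $\eta$, $J_\ell(X:(C_\ell,C_r),\eta)$ is the unique $\xi$ in the $L_2$-closure of $\mathrm{alg}(X,C_\ell,C_r)$ with, for all $n\ge0$ and $Z_1,\dots,Z_n\in\{X\}\cup C_\ell\cup C_r$, $\tau(Z_1\cdots Z_n\xi)=\sum_{k:Z_k=X}\tau\big((\prod_{p\in\{1..n\}\setminus(V_k\cup\{k\})}Z_p)L_{\eta(E(\prod_{p\in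 V_k}Z_p))}\big)$, $V_k=\{m:k<m\le n, Z_m\in\{X\}\cup C_\ell\}$ (products in increasing order, empty product $1$). For $Y\in A_r$, $J_r(Y:(C_\ell,C_r),\eta)$ is the unique $\nu$ in the closure of $\mathrm{alg}(Y,C_\ell,C_r)$ with $\tau(Z_1\cdots Z_n\nu)=\sum_{k:Z_k=Y}\tau\big((\prod_{p\notin V_k\cup\{k\}}Z_p)R_{\eta(E(\prod_{p\in V_k}Z_p))}\big)$ for $Z_i\in\{Y\}\cup C_\ell\cup C_r$, $V_k=\{m:k<m\le n,Z_m\in\{Y\}\cup C_r\}$. *)

theory Defs
  imports Complex_Main
begin

class star_cmplx_alg = ring_1 +
  fixes cscale :: "complex \<Rightarrow> 'a \<Rightarrow> 'a"
    and adj :: "'a \<Rightarrow> 'a"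
  assumes cscale_add_right: "cscale c (x + y) = cscale c x + cscale c y"
    and cscale_add_left: "cscale (c + d) x = cscale c x + cscale d x"
    and cscale_cscale: "cscale c (cscale d x) = cscale (c * d) x"
    and cscale_one: "cscale 1 x = x"
    and cscale_mult_left: "cscale c x * y = cscale c (x * y)"
    and cscale_mult_right: "x * cscale c y = cscale c (x * y)"
    and adj_add: "adj (x + y) = adj x + adj y"
    and adj_cscale: "adj (cscale c x) = cscale (cnj c) (adj x)"
    and adj_mult: "adj (x * y) = adj y * adj x"
    and adj_adj: "adj (adj x) = x"

definition clinear :: "('a::star_cmplx_alg \<Rightarrow> 'b::star_cmplx_alg) \<Rightarrow> bool" where
  "clinear f \<longleftrightarrow> (\<forall>x y. f (x + y) = f x + f y) \<and> (\<forall>c x. f (cscale c x) = cscale c (f x))"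

definition clinear_functional :: "('a::star_cmplx_alg \<Rightarrow> complex) \<Rightarrow> bool" where
  "clinear_functional f \<longleftrightarrow> (\<forall>x y. f (x + y) = f x + f y) \<and> (\<forall>c x. f (cscale c x) = c * f x)"

definition star_hom :: "('b::star_cmplx_alg \<Rightarrow> 'a::star_cmplx_alg) \<Rightarrow> bool" where
  "star_hom f \<longleftrightarrow> clinear f \<and> f 1 = 1 \<and> (\<forall>x y. f (x * y) = f x * f y) \<and> (\<forall>x. f (adj x) = adj (f x))"

definition star_antihom :: "('b::star_cmplx_alg \<Rightarrow> 'a::star_cmplx_alg) \<Rightarrow> bool" where
  "star_antihom f \<longleftrightarrow> clinear f \<and> f 1 = 1 \<and> (\<forall>x y. f (x * y) = f y * f x) \<and> (\<forall>x. f (adj x) = adj (f x))"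

text \<open>An n x n matrix over a set S is positive if it is a finite sum of matrices Y^* Y with
  Y \<in> M_n(S). Matrices are functions nat \<Rightarrow> nat \<Rightarrow> 'a, only entries i,j < n matter.\<close>
definition psd_mat :: "nat \<Rightarrow> 'a::star_cmplx_alg set \<Rightarrow> (nat \<Rightarrow> nat \<Rightarrow> 'a) \<Rightarrow> bool" where
  "psd_mat n S M \<longleftrightarrow>
     (\<exists>Ys. (\<forall>Y\<in>set Ys. \<forall>i<n. \<forall>j<n. Y i j \<in> S) \<and>
          (\<forall>i<n. \<forall>j<n. M i j = sum_list (map (\<lambda>Y. \<Sum>k<n. adj (Y k i) * Y k j) Ys)))"

definition cp_on :: "'a::star_cmplx_alg set \<Rightarrow> ('a \<Rightarrow> 'b::star_cmplx_alg) \<Rightarrow> bool" where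
  "cp_on S \<phi> \<longleftrightarrow> clinear \<phi> \<and>
     (\<forall>n M. psd_mat n S M \<longrightarrow> psd_mat n UNIV (\<lambda>i j. \<phi> (M i j)))"

text \<open>The unital *-homomorphism \<epsilon> : B \<otimes> B^op \<rightarrow> A is given by its restrictions
  L b = \<epsilon>(b \<otimes> 1) and R b = \<epsilon>(1 \<otimes> b): L is a unital *-homomorphism, R a unital
  *-anti-homomorphism, both injective, with commuting ranges.\<close>
definition bb_ncps :: "('b::star_cmplx_alg \<Rightarrow> 'a::star_cmplx_alg) \<Rightarrow> ('b \<Rightarrow> 'a) \<Rightarrow> ('a \<Rightarrow> 'b) \<Rightarrow> bool" where
  "bb_ncps L R E \<longleftrightarrow>
     star_hom L \<and> star_antihom R \<and> inj L \<and> inj R \<and> (\<forall>b c. L b * R c = R c * L b) \<and>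
     clinear E \<and> E 1 = 1 \<and>
     (\<forall>b1 b2 a. E (L b1 * R b2 * a) = b1 * E a * b2) \<and>
     (\<forall>a b. E (a * L b) = E (a * R b))"

definition A_left :: "('b::star_cmplx_alg \<Rightarrow> 'a::star_cmplx_alg) \<Rightarrow> 'a set" where
  "A_left R = {a. \<forall>c. a * R c = R c * a}"

definition A_right :: "('b::star_cmplx_alg \<Rightarrow> 'a::star_cmplx_alg) \<Rightarrow> 'a set" where
  "A_right L = {a. \<forall>c. a * L c = L c * a}"

definition cstate :: "('a::star_cmplx_alg \<Rightarrow> complex) \<Rightarrow> bool" where
  "cstate \<tau> \<longleftrightarrow> clinear_functional \<tau> \<and> \<tau> 1 = 1 \<and>
     (\<forall>a. Im (\<tau> (adj a * a)) = 0 \<and> 0 \<le> Re (\<tau> (adj a * a)))"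

definition analytical :: "('b::star_cmplx_alg \<Rightarrow> 'a::star_cmplx_alg) \<Rightarrow> ('b \<Rightarrow> 'a) \<Rightarrow> ('a \<Rightarrow> 'b) \<Rightarrow> ('a \<Rightarrow> complex) \<Rightarrow> bool" where
  "analytical L R E \<tau> \<longleftrightarrow>
     bb_ncps L R E \<and> cstate \<tau> \<and>
     (\<forall>a. \<tau> a = \<tau> (L (E a)) \<and> \<tau> a = \<tau> (R (E a))) \<and>
     (\<forall>b c. \<tau> (L (b * c)) = \<tau> (L (c * b))) \<and>
     (\<forall>a. \<exists>C. \<forall>x. Re (\<tau> (adj (a * x) * (a * x))) \<le> C * Re (\<tau> (adj x * x))) \<and>
     cp_on (A_left R) E \<and> cp_on (A_right L) E"

definition unital_subalg :: "'a::star_cmplx_alg set \<Rightarrow> bool" where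
  "unital_subalg S \<longleftrightarrow> 1 \<in> S \<and> (\<forall>x\<in>S. \<forall>y\<in>S. x + y \<in> S \<and> x * y \<in> S) \<and>
     (\<forall>c. \<forall>x\<in>S. cscale c x \<in> S)"

definition B_pair :: "('b::star_cmplx_alg \<Rightarrow> 'a::star_cmplx_alg) \<Rightarrow> ('b \<Rightarrow> 'a) \<Rightarrow> 'a set \<Rightarrow> 'a set \<Rightarrow> bool" where
  "B_pair L R Cl Cr \<longleftrightarrow>
     unital_subalg Cl \<and> range L \<subseteq> Cl \<and> Cl \<subseteq> A_left R \<and>
     unital_subalg Cr \<and> range R \<subseteq> Cr \<and> Cr \<subseteq> A_right L"

inductive_set gen_alg :: "'a::star_cmplx_alg set \<Rightarrow> 'a set" for S where
  gen_base: "x \<in> S \<Longrightarrow> x \<in> gen_alg S"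
| gen_one: "1 \<in> gen_alg S"
| gen_add: "x \<in> gen_alg S \<Longrightarrow> y \<in> gen_alg S \<Longrightarrow> x + y \<in> gen_alg S"
| gen_mult: "x \<in> gen_alg S \<Longrightarrow> y \<in> gen_alg S \<Longrightarrow> x * y \<in> gen_alg S"
| gen_scale: "x \<in> gen_alg S \<Longrightarrow> cscale c x \<in> gen_alg S"

text \<open>Elements of L_2(A,\<tau>) are represented by sequences in A that are Cauchy for the
  seminorm a \<mapsto> \<tau>(a^*a)^{1/2}; an element lies in the L_2-closure of a subset S iff it
  has such a representing sequence in S.\<close>
definition l2_cauchy :: "('a::star_cmplx_alg \<Rightarrow> complex) \<Rightarrow> (nat \<Rightarrow> 'a) \<Rightarrow> bool" where
  "l2_cauchy \<tau> x \<longleftrightarrow> (\<forall>e>0. \<exists>N. \<forall>m\<ge>N. \<forall>k\<ge>N.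
      Re (\<tau> (adj (x m - x k) * (x m - x k))) < e)"

text \<open>\<tau>(a\<xi>) = \<langle>a\<xi>,1\<rangle> for \<xi> represented by the sequence x.\<close>
definition tau_L2 :: "('a::star_cmplx_alg \<Rightarrow> complex) \<Rightarrow> 'a \<Rightarrow> (nat \<Rightarrow> 'a) \<Rightarrow> complex" where
  "tau_L2 \<tau> a x = lim (\<lambda>k. \<tau> (a * x k))"

definition subprod :: "'a::monoid_mult list \<Rightarrow> (nat \<Rightarrow> bool) \<Rightarrow> 'a" where
  "subprod Zs P = prod_list (map (\<lambda>p. Zs ! p) (filter P [0..<length Zs]))"

text \<open>x represents J_l(X:(Cl,Cr),\<eta>) (indices are 0-based).\<close>
definition is_J_left ::
  "('b::star_cmplx_alg \<Rightarrow> 'a::star_cmplx_alg) \<Rightarrow> ('a \<Rightarrow> 'b) \<Rightarrow> ('a \<Rightarrow> complex) \<Rightarrow>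
   'a \<Rightarrow> 'a set \<Rightarrow> 'a set \<Rightarrow> ('b \<Rightarrow> 'b) \<Rightarrow> (nat \<Rightarrow> 'a) \<Rightarrow> bool" where
  "is_J_left L E \<tau> X Cl Cr \<eta> x \<longleftrightarrow>
     l2_cauchy \<tau> x \<and> (\<forall>k. x k \<in> gen_alg (insert X (Cl \<union> Cr))) \<and>
     (\<forall>Zs. set Zs \<subseteq> insert X (Cl \<union> Cr) \<longrightarrow>
        tau_L2 \<tau> (prod_list Zs) x =
          (\<Sum>k\<in>{k. k < length Zs \<and> Zs ! k = X}.
             (let V = {m. k < m \<and> m < length Zs \<and> Zs ! m \<in> insert X Cl} in
              \<tau> (subprod Zs (\<lambda>p. p \<notin> V \<and> p \<noteq> k) * L (\<eta> (E (subprod Zs (\<lambda>p. p \<in> V))))))))"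

definition is_J_right ::
  "('b::star_cmplx_alg \<Rightarrow> 'a::star_cmplx_alg) \<Rightarrow> ('a \<Rightarrow> 'b) \<Rightarrow> ('a \<Rightarrow> complex) \<Rightarrow>
   'a \<Rightarrow> 'a set \<Rightarrow> 'a set \<Rightarrow> ('b \<Rightarrow> 'b) \<Rightarrow> (nat \<Rightarrow> 'a) \<Rightarrow> bool" where
  "is_J_right R E \<tau> Y Cl Cr \<eta> y \<longleftrightarrow>
     l2_cauchy \<tau> y \<and> (\<forall>k. y k \<in> gen_alg (insert Y (Cl \<union> Cr))) \<and>
     (\<forall>Zs. set Zs \<subseteq> insert Y (Cl \<union> Cr) \<longrightarrow>
        tau_L2 \<tau> (prod_list Zs) y =
          (\<Sum>k\<in>{k. k < length Zs \<and> Zs ! k = Y}.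
             (let V = {m. k < m \<and> m < length Zs \<and> Zs ! m \<in> insert Y Cr} in
              \<tau> (subprod Zs (\<lambda>p. p \<notin> V \<and> p \<noteq> k) * R (\<eta> (E (subprod Zs (\<lambda>p. p \<in> V))))))))"

end

theory Submission
  imports Defs
begin


context star_cmplx_alg begin

lemma cscale_zero_right[simp]: "cscale c 0 = 0"
proof -
  have "cscale c 0 = cscale c 0 + cscale c 0" using cscale_add_right[of c 0 0] by simp
  then show ?thesis by simp
qed

lemma cscale_zero_left[simp]: "cscale 0 x = 0"
proof -
  have "cscale 0 x = cscale 0 x + cscale 0 x" using cscale_add_left[of 0 0 x] by simp
  then show ?thesis by simp
qed

lemma cscale_minus_right: "cscale c (- x) = - cscale c x"
  using cscale_add_right[of c x "-x"] by (simp add: eq_neg_iff_add_eq_0 add.commute)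

lemma cscale_diff_right: "cscale c (x - y) = cscale c x - cscale c y"
  using cscale_add_right[of c x "-y"] by (simp add: cscale_minus_right)

lemma cscale_minus_left: "cscale (- c) x = - cscale c x"
  using cscale_add_left[of c "-c" x] by (simp add: eq_neg_iff_add_eq_0 add.commute)

lemma cscale_diff_left: "cscale (c - d) x = cscale c x - cscale d x"
  using cscale_add_left[of c "-d" x] by (simp add: cscale_minus_left)

lemma cscale_neg1: "cscale (-1) x = - x"
  by (simp add: cscale_minus_left cscale_one)

lemma cscale_one_mult: "cscale c 1 * x = cscale c x"
  by (simp add: cscale_mult_left)

lemma mult_cscale_one: "x * cscale c 1 = cscale c x"
  by (simp add: cscale_mult_right)

lemma adj_zero[simp]: "adj 0 = 0"
proof -
  have "adj 0 = adj 0 + adj 0" using adj_add[of 0 0] by simp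
  then show ?thesis by simp
qed

lemma adj_one[simp]: "adj 1 = 1"
proof -
  have "adj 1 = adj 1 * adj (adj 1)" by (simp only: adj_adj mult_1_right)
  also have "\<dots> = adj (adj 1 * 1)" by (rule adj_mult[symmetric])
  also have "\<dots> = 1" by (simp add: adj_adj)
  finally show ?thesis .
qed

lemma adj_minus: "adj (- x) = - adj x"
  using adj_add[of x "-x"] by (simp add: eq_neg_iff_add_eq_0 add.commute)

lemma adj_diff: "adj (x - y) = adj x - adj y"
  using adj_add[of x "-y"] by (simp add: adj_minus)

lemma cscale_inj: assumes "x \<noteq> 0" "cscale s x = cscale t x" shows "s = t"
proof (rule ccontr)
  assume st: "s \<noteq> t"
  have "cscale (s - t) x = 0" using assms(2) by (simp add: cscale_diff_left)
  then have "cscale (1/(s-t)) (cscale (s - t) x) = 0" by simp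
  then have "x = 0" using st by (simp add: cscale_cscale cscale_one)
  with assms(1) show False by simp
qed

end



lemma clinear_zero: "clinear f \<Longrightarrow> f 0 = 0"
  unfolding clinear_def using add_cancel_right_right by metis

lemma clinear_add: "clinear f \<Longrightarrow> f (x + y) = f x + f y"
  unfolding clinear_def by blast

lemma clinear_cscale: "clinear f \<Longrightarrow> f (cscale c x) = cscale c (f x)"
  unfolding clinear_def by blast

lemma clinear_minus: "clinear f \<Longrightarrow> f (- x) = - f x"
  using clinear_add[of f x "-x"] clinear_zero[of f] by (simp add: eq_neg_iff_add_eq_0 add.commute)

lemma clinear_diff: "clinear f \<Longrightarrow> f (x - y) = f x - f y"
  using clinear_add[of f x "-y"] clinear_minus[of f y] by simp

lemma clf_add: "clinear_functional f \<Longrightarrow> f (x + y) = f x + f y"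
  unfolding clinear_functional_def by blast

lemma clf_cscale: "clinear_functional f \<Longrightarrow> f (cscale c x) = c * f x"
  unfolding clinear_functional_def by blast

lemma clf_zero: "clinear_functional f \<Longrightarrow> f 0 = 0"
  using clf_add[of f 0 0] by simp

lemma clf_minus: "clinear_functional f \<Longrightarrow> f (- x) = - f x"
  using clf_add[of f x "-x"] clf_zero[of f] by (simp add: eq_neg_iff_add_eq_0 add.commute)

lemma clf_diff: "clinear_functional f \<Longrightarrow> f (x - y) = f x - f y"
  using clf_add[of f x "-y"] clf_minus[of f y] by simp




lemma state_herm:
  assumes st: "cstate \<tau>"
  shows "\<tau> (adj y) = cnj (\<tau> y)"
proof -
  have lf: "clinear_functional \<tau>" and t1: "\<tau> 1 = 1"
    and pos: "\<And>a. Im (\<tau> (adj a * a)) = 0" using st unfolding cstate_def by auto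
  have e1: "adj (1 + y) * (1 + y) = 1 + y + adj y + adj y * y"
    by (simp add: adj_add algebra_simps)
  have "Im (\<tau> (adj (1 + y) * (1 + y))) = 0" by (rule pos)
  then have i1: "Im (\<tau> y) + Im (\<tau> (adj y)) = 0"
    unfolding e1 using pos[of y] by (simp add: clf_add[OF lf] t1)
  have e2: "adj (1 + cscale \<i> y) * (1 + cscale \<i> y) = 1 + cscale \<i> y + cscale (- \<i>) (adj y) + adj y * y"
  proof -
    have "adj (1 + cscale \<i> y) = 1 + cscale (- \<i>) (adj y)" by (simp add: adj_add adj_cscale)
    then have "adj (1 + cscale \<i> y) * (1 + cscale \<i> y) = (1 + cscale (- \<i>) (adj y)) * (1 + cscale \<i> y)" by simp
    also have "\<dots> = 1 + cscale \<i> y + cscale (- \<i>) (adj y) + cscale (- \<i>) (adj y) * cscale \<i> y"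
      by (simp add: algebra_simps)
    also have "cscale (- \<i>) (adj y) * cscale \<i> y = adj y * y"
      by (simp add: cscale_mult_left cscale_mult_right cscale_cscale cscale_one)
    finally show ?thesis .
  qed
  have "Im (\<tau> (adj (1 + cscale \<i> y) * (1 + cscale \<i> y))) = 0" by (rule pos)
  then have i2: "Re (\<tau> y) - Re (\<tau> (adj y)) = 0"
    unfolding e2 using pos[of y] by (simp add: clf_add[OF lf] clf_cscale[OF lf] t1)
  show ?thesis using i1 i2 by (simp add: complex_eq_iff)
qed

lemma state_cs1:
  assumes st: "cstate \<tau>"
  shows "(cmod (\<tau> y))^2 \<le> Re (\<tau> (adj y * y))"
proof -
  have lf: "clinear_functional \<tau>" and t1: "\<tau> 1 = 1"
    and pos: "\<And>a. 0 \<le> Re (\<tau> (adj a * a))" using st unfolding cstate_def by auto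
  define t where "t = \<tau> y"
  define z where "z = y - cscale t 1"
  have az: "adj z = adj y - cscale (cnj t) 1" unfolding z_def by (simp add: adj_diff adj_cscale)
  have "adj z * z = adj y * y - cscale t (adj y) - cscale (cnj t) y + cscale (cnj t * t) 1"
    unfolding az unfolding z_def
    by (simp add: algebra_simps cscale_mult_left cscale_mult_right cscale_cscale cscale_diff_right cscale_one)
  then have "\<tau> (adj z * z) = \<tau> (adj y * y) - t * cnj t - cnj t * t + cnj t * t"
    by (simp add: clf_add[OF lf] clf_diff[OF lf] clf_cscale[OF lf] t1 state_herm[OF st] t_def)
  then have "Re (\<tau> (adj z * z)) = Re (\<tau> (adj y * y)) - (cmod t)^2"
    by (simp add: complex_mult_cnj cmod_power2)
  with pos[of z] show ?thesis unfolding t_def by simp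
qed

lemma l2_cauchy_mult:
  assumes st: "cstate \<tau>"
    and bnd: "\<forall>a. \<exists>C. \<forall>x. Re (\<tau> (adj (a * x) * (a * x))) \<le> C * Re (\<tau> (adj x * x))"
    and cau: "l2_cauchy \<tau> x"
  shows "l2_cauchy \<tau> (\<lambda>k. a * x k)"
  unfolding l2_cauchy_def
proof (intro allI impI)
  fix e :: real assume e: "e > 0"
  have pos: "\<And>a. 0 \<le> Re (\<tau> (adj a * a))" using st unfolding cstate_def by auto
  obtain C where C: "\<And>y. Re (\<tau> (adj (a * y) * (a * y))) \<le> C * Re (\<tau> (adj y * y))" using bnd by blast
  define D where "D = max C 1"
  have D: "D > 0" "D \<ge> C" unfolding D_def by auto
  obtain N where N: "\<And>m k. m \<ge> N \<Longrightarrow> k \<ge> N \<Longrightarrow> Re (\<tau> (adj (x m - x k) * (x m - x k))) < e / D"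
    using cau e D unfolding l2_cauchy_def by (meson divide_pos_pos)
  show "\<exists>N. \<forall>m\<ge>N. \<forall>k\<ge>N. Re (\<tau> (adj (a * x m - a * x k) * (a * x m - a * x k))) < e"
  proof (intro exI allI impI)
    fix m k assume mk: "m \<ge> N" "k \<ge> N"
    have "Re (\<tau> (adj (a * x m - a * x k) * (a * x m - a * x k))) = Re (\<tau> (adj (a * (x m - x k)) * (a * (x m - x k))))"
      by (simp add: right_diff_distrib)
    also have "\<dots> \<le> C * Re (\<tau> (adj (x m - x k) * (x m - x k)))" by (rule C)
    also have "\<dots> \<le> D * Re (\<tau> (adj (x m - x k) * (x m - x k)))" using D pos by (simp add: mult_right_mono)
    also have "\<dots> < D * (e / D)" using N[OF mk] D by (simp only: mult_strict_left_mono)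
    also have "\<dots> = e" using D by simp
    finally show "Re (\<tau> (adj (a * x m - a * x k) * (a * x m - a * x k))) < e" .
  qed
qed

lemma tau_conv:
  assumes st: "cstate \<tau>"
    and bnd: "\<forall>a. \<exists>C. \<forall>x. Re (\<tau> (adj (a * x) * (a * x))) \<le> C * Re (\<tau> (adj x * x))"
    and cau: "l2_cauchy \<tau> x"
  shows "convergent (\<lambda>k. \<tau> (a * x k))"
proof -
  have lf: "clinear_functional \<tau>" using st unfolding cstate_def by auto
  have c2: "l2_cauchy \<tau> (\<lambda>k. a * x k)" by (rule l2_cauchy_mult[OF st bnd cau])
  have "Cauchy (\<lambda>k. \<tau> (a * x k))"
  proof (rule metric_CauchyI)
    fix e :: real assume e: "e > 0"
    obtain N where N: "\<And>m k. m \<ge> N \<Longrightarrow> k \<ge> N \<Longrightarrow> Re (\<tau> (adj (a * x m - a * x k) * (a * x m - a * x k))) < e^2"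
      using c2 e unfolding l2_cauchy_def by (meson zero_less_power)
    show "\<exists>M. \<forall>m\<ge>M. \<forall>n\<ge>M. dist (\<tau> (a * x m)) (\<tau> (a * x n)) < e"
    proof (intro exI allI impI)
      fix m n assume mn: "m \<ge> N" "n \<ge> N"
      have "(dist (\<tau> (a * x m)) (\<tau> (a * x n)))^2 = (cmod (\<tau> (a * x m - a * x n)))^2"
        by (simp add: dist_norm clf_diff[OF lf])
      also have "\<dots> \<le> Re (\<tau> (adj (a * x m - a * x n) * (a * x m - a * x n)))" by (rule state_cs1[OF st])
      also have "\<dots> < e^2" by (rule N[OF mn])
      finally show "dist (\<tau> (a * x m)) (\<tau> (a * x n)) < e"
        using e by (meson power_less_imp_less_base zero_le_dist less_imp_le)
    qed
  qed
  then show ?thesis by (simp add: Cauchy_convergent_iff)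
qed




definition Vs :: "'a set \<Rightarrow> 'a list \<Rightarrow> nat \<Rightarrow> nat set" where
  "Vs VS Zs k = {m. k < m \<and> m < length Zs \<and> Zs ! m \<in> VS}"

definition Xpos :: "'a \<Rightarrow> 'a list \<Rightarrow> nat set" where
  "Xpos X Zs = {k. k < length Zs \<and> Zs ! k = X}"

definition rhs :: "('b \<Rightarrow> 'a::star_cmplx_alg) \<Rightarrow> ('a \<Rightarrow> 'b) \<Rightarrow> ('a \<Rightarrow> complex) \<Rightarrow> 'a \<Rightarrow> 'a set \<Rightarrow> ('b \<Rightarrow> 'b) \<Rightarrow> 'a list \<Rightarrow> complex" where
  "rhs M E \<tau> X VS \<eta> Zs = (\<Sum>k\<in>Xpos X Zs.
      \<tau> (subprod Zs (\<lambda>p. p \<notin> Vs VS Zs k \<and> p \<noteq> k) * M (\<eta> (E (subprod Zs (\<lambda>p. p \<in> Vs VS Zs k))))))"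

lemma is_J_left_alt:
  "is_J_left L E \<tau> X Cl Cr \<eta> x \<longleftrightarrow> l2_cauchy \<tau> x \<and> (\<forall>k. x k \<in> gen_alg (insert X (Cl \<union> Cr))) \<and>
     (\<forall>Zs. set Zs \<subseteq> insert X (Cl \<union> Cr) \<longrightarrow> tau_L2 \<tau> (prod_list Zs) x = rhs L E \<tau> X (insert X Cl) \<eta> Zs)"
  unfolding is_J_left_def rhs_def Vs_def Xpos_def Let_def by simp

lemma is_J_right_alt:
  "is_J_right R E \<tau> Y Cl Cr \<eta> x \<longleftrightarrow> l2_cauchy \<tau> x \<and> (\<forall>k. x k \<in> gen_alg (insert Y (Cl \<union> Cr))) \<and>
     (\<forall>Zs. set Zs \<subseteq> insert Y (Cl \<union> Cr) \<longrightarrow> tau_L2 \<tau> (prod_list Zs) x = rhs R E \<tau> Y (insert Y Cr) \<eta> Zs)"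
  unfolding is_J_right_def rhs_def Vs_def Xpos_def Let_def by simp

lemma upt_shift: "[n..<n+m] = map (\<lambda>p. n + p) [0..<m]"
  by (induction m) auto

lemma subprod_append:
  "subprod (xs @ ys) P = subprod xs P * subprod ys (\<lambda>p. P (length xs + p))"
proof -
  have u: "[0..<length (xs @ ys)] = [0..<length xs] @ map (\<lambda>p. length xs + p) [0..<length ys]"
    using upt_add_eq_append[of 0 "length xs" "length ys"] upt_shift[of "length xs" "length ys"] by simp
  have a: "map (\<lambda>p. (xs @ ys) ! p) (filter P [0..<length xs]) = map (\<lambda>p. xs ! p) (filter P [0..<length xs])"
    by (rule map_cong) (auto simp: nth_append)
  have b: "map (\<lambda>p. (xs @ ys) ! p) (filter P (map (\<lambda>p. length xs + p) [0..<length ys]))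
      = map (\<lambda>p. ys ! p) (filter (\<lambda>p. P (length xs + p)) [0..<length ys])"
    unfolding filter_map map_map o_def by (simp add: nth_append)
  show ?thesis unfolding subprod_def u filter_append map_append prod_list.append a b ..
qed

lemma subprod_cong:
  "(\<And>p. p < length xs \<Longrightarrow> P p = Q p) \<Longrightarrow> subprod xs P = subprod xs Q"
  unfolding subprod_def by (rule arg_cong[where f=prod_list], rule arg_cong[where f="map _"], rule filter_cong) auto

lemma subprod_all: assumes "\<And>p. p < length xs \<Longrightarrow> P p" shows "subprod xs P = prod_list xs"
proof -
  have "subprod xs P = subprod xs (\<lambda>_. True)" by (rule subprod_cong) (use assms in auto)
  also have "\<dots> = prod_list xs" unfolding subprod_def by (simp add: map_nth)
  finally show ?thesis .
qed

lemma subprod_none: assumes "\<And>p. p < length xs \<Longrightarrow> \<not> P p" shows "subprod xs P = 1"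
proof -
  have "subprod xs P = subprod xs (\<lambda>_. False)" by (rule subprod_cong) (use assms in auto)
  also have "\<dots> = 1" unfolding subprod_def by simp
  finally show ?thesis .
qed

lemma prod_list_in:
  assumes "1 \<in> Ac" "\<forall>a\<in>Ac. \<forall>b\<in>Ac. a * b \<in> Ac" "set xs \<subseteq> Ac"
  shows "prod_list xs \<in> Ac"
  using assms(3) by (induction xs) (use assms(1,2) in auto)

lemma subprod_in:
  assumes "1 \<in> Ac" "\<forall>a\<in>Ac. \<forall>b\<in>Ac. a * b \<in> Ac" "set xs \<subseteq> Ac"
  shows "subprod xs P \<in> Ac"
  unfolding subprod_def by (rule prod_list_in[OF assms(1,2)]) (use assms(3) in auto)

lemma Xpos_append:
  assumes "X \<notin> set F" "X \<notin> set T"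
  shows "Xpos X (F @ Zs @ T) = (\<lambda>k. length F + k) ` Xpos X Zs"
proof (rule set_eqI, rule iffI)
  fix k assume k: "k \<in> Xpos X (F @ Zs @ T)"
  then have kl: "k < length F + length Zs + length T" and kx: "(F @ Zs @ T) ! k = X"
    unfolding Xpos_def by auto
  have "\<not> k < length F"
  proof
    assume "k < length F" then have "F ! k = X" using kx by (simp add: nth_append)
    then show False using assms(1) \<open>k < length F\<close> by (metis nth_mem)
  qed
  moreover have "\<not> k \<ge> length F + length Zs"
  proof
    assume a: "k \<ge> length F + length Zs"
    then have "\<not> k - length F < length Zs" "\<not> k < length F" by auto
    then have "T ! (k - length F - length Zs) = X" using kx by (simp add: nth_append)
    moreover have "k - length F - length Zs < length T" using a kl by simp
    ultimately show False using assms(2) by (metis nth_mem)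
  qed
  ultimately show "k \<in> (\<lambda>k. length F + k) ` Xpos X Zs" using kx
    by (auto simp: Xpos_def nth_append image_iff intro!: exI[of _ "k - length F"])
next
  fix k assume "k \<in> (\<lambda>k. length F + k) ` Xpos X Zs"
  then show "k \<in> Xpos X (F @ Zs @ T)" by (auto simp: Xpos_def nth_append)
qed

lemma rhs_append:
  assumes "X \<notin> set F" "X \<notin> set T1" "X \<notin> set T2" "set T1 \<inter> VS = {}" "set T2 \<subseteq> VS"
  shows "rhs M E \<tau> X VS \<eta> (F @ Zs @ T1 @ T2) = (\<Sum>k\<in>Xpos X Zs.
     \<tau> (prod_list F * subprod Zs (\<lambda>p. p \<notin> Vs VS Zs k \<and> p \<noteq> k) * prod_list T1 *
        M (\<eta> (E (subprod Zs (\<lambda>p. p \<in> Vs VS Zs k) * prod_list T2)))))"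
proof -
  let ?W = "F @ Zs @ T1 @ T2"
  let ?o = "length F"
  have xp: "Xpos X ?W = (\<lambda>k. ?o + k) ` Xpos X Zs"
    using Xpos_append[of X F "T1 @ T2" Zs] assms(1-3) by simp
  have inj: "inj_on (\<lambda>k. ?o + k) (Xpos X Zs)" by (simp add: inj_on_def)
  have trm: "\<tau> (subprod ?W (\<lambda>p. p \<notin> Vs VS ?W (?o + k) \<and> p \<noteq> ?o + k) * M (\<eta> (E (subprod ?W (\<lambda>p. p \<in> Vs VS ?W (?o + k))))))
     = \<tau> (prod_list F * subprod Zs (\<lambda>p. p \<notin> Vs VS Zs k \<and> p \<noteq> k) * prod_list T1 *
        M (\<eta> (E (subprod Zs (\<lambda>p. p \<in> Vs VS Zs k) * prod_list T2))))"
    if k: "k \<in> Xpos X Zs" for k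
  proof -
    have kl: "k < length Zs" using k unfolding Xpos_def by auto
    have sp: "subprod ?W P = subprod F P * (subprod Zs (\<lambda>p. P (?o + p)) *
        (subprod T1 (\<lambda>p. P (?o + length Zs + p)) * subprod T2 (\<lambda>p. P (?o + length Zs + length T1 + p))))" for P
      by (simp add: subprod_append add.assoc)
    have vF: "?o + k \<in> Vs VS ?W (?o + k) \<longleftrightarrow> False" by (simp add: Vs_def)
    have v1: "\<And>p. p < length F \<Longrightarrow> p \<notin> Vs VS ?W (?o + k)" by (simp add: Vs_def)
    have v2: "\<And>p. p < length Zs \<Longrightarrow> (?o + p \<in> Vs VS ?W (?o + k)) = (p \<in> Vs VS Zs k)"
      by (auto simp: Vs_def nth_append)
    have v3: "\<And>p. p < length T1 \<Longrightarrow> ?o + length Zs + p \<notin> Vs VS ?W (?o + k)"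
    proof -
      fix p assume p: "p < length T1"
      have "?W ! (?o + length Zs + p) = T1 ! p" using p by (simp add: nth_append)
      moreover have "T1 ! p \<notin> VS" using assms(4) p nth_mem by blast
      ultimately show "?o + length Zs + p \<notin> Vs VS ?W (?o + k)" by (simp add: Vs_def)
    qed
    have v4: "\<And>p. p < length T2 \<Longrightarrow> ?o + length Zs + length T1 + p \<in> Vs VS ?W (?o + k)"
    proof -
      fix p assume p: "p < length T2"
      have "?W ! (?o + length Zs + length T1 + p) = T2 ! p" using p by (simp add: nth_append)
      moreover have "T2 ! p \<in> VS" using assms(5) p nth_mem by blast
      ultimately show "?o + length Zs + length T1 + p \<in> Vs VS ?W (?o + k)" using kl p by (simp add: Vs_def)
    qed
    have A: "subprod ?W (\<lambda>p. p \<notin> Vs VS ?W (?o + k) \<and> p \<noteq> ?o + k)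
       = prod_list F * subprod Zs (\<lambda>p. p \<notin> Vs VS Zs k \<and> p \<noteq> k) * prod_list T1"
    proof -
      have "subprod F (\<lambda>p. p \<notin> Vs VS ?W (?o + k) \<and> p \<noteq> ?o + k) = prod_list F"
        by (rule subprod_all) (use v1 in auto)
      moreover have "subprod Zs (\<lambda>p. ?o + p \<notin> Vs VS ?W (?o + k) \<and> ?o + p \<noteq> ?o + k) = subprod Zs (\<lambda>p. p \<notin> Vs VS Zs k \<and> p \<noteq> k)"
        by (rule subprod_cong) (use v2 in auto)
      moreover have "subprod T1 (\<lambda>p. ?o + length Zs + p \<notin> Vs VS ?W (?o + k) \<and> ?o + length Zs + p \<noteq> ?o + k) = prod_list T1"
        by (rule subprod_all) (use v3 kl in auto)
      moreover have "subprod T2 (\<lambda>p. ?o + length Zs + length T1 + p \<notin> Vs VS ?W (?o + k) \<and> ?o + length Zs + length T1 + p \<noteq> ?o + k) = 1"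
        by (rule subprod_none) (use v4 in auto)
      ultimately show ?thesis by (simp add: sp mult.assoc)
    qed
    have B: "subprod ?W (\<lambda>p. p \<in> Vs VS ?W (?o + k))
       = subprod Zs (\<lambda>p. p \<in> Vs VS Zs k) * prod_list T2"
    proof -
      have "subprod F (\<lambda>p. p \<in> Vs VS ?W (?o + k)) = 1"
        by (rule subprod_none) (use v1 in auto)
      moreover have "subprod Zs (\<lambda>p. ?o + p \<in> Vs VS ?W (?o + k)) = subprod Zs (\<lambda>p. p \<in> Vs VS Zs k)"
        by (rule subprod_cong) (use v2 in auto)
      moreover have "subprod T1 (\<lambda>p. ?o + length Zs + p \<in> Vs VS ?W (?o + k)) = 1"
        by (rule subprod_none) (use v3 in auto)
      moreover have "subprod T2 (\<lambda>p. ?o + length Zs + length T1 + p \<in> Vs VS ?W (?o + k)) = prod_list T2"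
        by (rule subprod_all) (use v4 in auto)
      ultimately show ?thesis by (simp add: sp)
    qed
    show ?thesis unfolding A B ..
  qed
  show ?thesis unfolding rhs_def xp sum.reindex[OF inj] o_def
    by (rule sum.cong) (use trm in auto)
qed




lemma usa_cscale: "unital_subalg S \<Longrightarrow> x \<in> S \<Longrightarrow> cscale c x \<in> S"
  unfolding unital_subalg_def by blast
lemma usa_one: "unital_subalg S \<Longrightarrow> 1 \<in> S"
  unfolding unital_subalg_def by blast
lemma usa_add: "unital_subalg S \<Longrightarrow> x \<in> S \<Longrightarrow> y \<in> S \<Longrightarrow> x + y \<in> S"
  unfolding unital_subalg_def by blast
lemma usa_mult: "unital_subalg S \<Longrightarrow> x \<in> S \<Longrightarrow> y \<in> S \<Longrightarrow> x * y \<in> S"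
  unfolding unital_subalg_def by blast
lemma usa_zero: "unital_subalg S \<Longrightarrow> (0::'a::star_cmplx_alg) \<in> S"
  using usa_cscale[of S 1 0] usa_one[of S] by simp
lemma usa_diff: "unital_subalg S \<Longrightarrow> x \<in> S \<Longrightarrow> y \<in> S \<Longrightarrow> x - y \<in> S"
  using usa_add[of S x "cscale (-1) y"] usa_cscale[of S y "-1"] by (simp add: cscale_neg1)
lemma usa_cscale_iff: "unital_subalg S \<Longrightarrow> s \<noteq> 0 \<Longrightarrow> cscale s x \<in> S \<Longrightarrow> x \<in> S"
  using usa_cscale[of S "cscale s x" "1/s"] by (simp add: cscale_cscale cscale_one)

lemma cscale_pair: "s \<noteq> 0 \<Longrightarrow> cscale s u * cscale (1/s) v = u * (v::'a::star_cmplx_alg)"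
  by (simp add: cscale_mult_left cscale_mult_right cscale_cscale cscale_one)

lemma rep_X_free:
  fixes w X :: "'a::star_cmplx_alg"
  assumes Cs: "unital_subalg Cs" and w: "w \<in> Cs" "w \<noteq> 0" and one: "(1::'a) \<noteq> 0"
  shows "\<exists>T. set T \<subseteq> Cs \<and> X \<notin> set T \<and> prod_list T = w"
proof (cases "w = X")
  case False
  then show ?thesis using w by (intro exI[of _ "[w]"]) auto
next
  case True
  have pr: "prod_list [cscale s w, cscale (1/s) 1] = w" if "s \<noteq> 0" for s
    using cscale_pair[OF that, of w 1] by simp
  have ne: "cscale s w \<noteq> X" if "s \<noteq> 1" for s :: complex
    using cscale_inj[OF w(2), of s 1] that True by (auto simp: cscale_one)
  show ?thesis
  proof (cases "cscale (1/2) 1 = X")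
    case False
    show ?thesis
      by (rule exI[of _ "[cscale 2 w, cscale (1/2) 1]"])
         (use False ne[of 2] pr[of 2] usa_cscale[OF Cs w(1)] usa_cscale[OF Cs usa_one[OF Cs]] in auto)
  next
    case T2: True
    have "cscale (1/3) 1 \<noteq> X"
      using cscale_inj[OF one, of "1/3" "1/2"] T2 by auto
    then show ?thesis
      by (intro exI[of _ "[cscale 3 w, cscale (1/3) 1]"])
         (use ne[of 3] pr[of 3] usa_cscale[OF Cs w(1)] usa_cscale[OF Cs usa_one[OF Cs]] in auto)
  qed
qed

lemma K_scale:
  assumes "clinear E" "clinear \<eta>" "clinear M" "s \<noteq> 0"
  shows "\<tau> (P * cscale s u * M (\<eta> (E (Q * cscale (1/s) v)))) = \<tau> (P * u * M (\<eta> (E (Q * v))))"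
proof -
  have "P * cscale s u * M (\<eta> (E (Q * cscale (1/s) v))) = cscale s (P * u) * cscale (1/s) (M (\<eta> (E (Q * v))))"
    by (simp add: cscale_mult_right clinear_cscale[OF assms(1)] clinear_cscale[OF assms(2)] clinear_cscale[OF assms(3)])
  also have "\<dots> = P * u * M (\<eta> (E (Q * v)))" by (rule cscale_pair[OF assms(4)])
  finally show ?thesis by simp
qed

lemma subprod_in2:
  assumes "1 \<in> Ac" "\<forall>a\<in>Ac. \<forall>b\<in>Ac. a * b \<in> Ac" "\<And>p. p < length xs \<Longrightarrow> P p \<Longrightarrow> xs ! p \<in> Ac"
  shows "subprod xs P \<in> Ac"
  unfolding subprod_def by (rule prod_list_in[OF assms(1,2)]) (use assms(3) in auto)




lemma generic:
  fixes \<tau> :: "'a::star_cmplx_alg \<Rightarrow> complex" and E :: "'a \<Rightarrow> 'b::star_cmplx_alg"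
    and M :: "'b \<Rightarrow> 'a" and \<eta> \<eta>' :: "'b \<Rightarrow> 'b" and X u v :: 'a and x :: "nat \<Rightarrow> 'a"
  assumes st: "cstate \<tau>"
    and bnd: "\<forall>a. \<exists>C. \<forall>x. Re (\<tau> (adj (a * x) * (a * x))) \<le> C * Re (\<tau> (adj x * x))"
    and linE: "clinear E" and lineta: "clinear \<eta>" and linM: "clinear M"
    and Cs: "unital_subalg Cs" and Os: "unital_subalg Os"
    and SS: "S = insert X (Cs \<union> Os)"
    and AcX: "insert X Cs \<subseteq> Ac" and Ac1: "1 \<in> Ac" and Acm: "\<forall>a\<in>Ac. \<forall>b\<in>Ac. a * b \<in> Ac"
    and uO: "u \<in> Os" and vC: "v \<in> Cs"
    and ucomm: "\<forall>a\<in>Ac. u * a = a * u"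
    and K: "\<forall>P. \<forall>Q\<in>Ac. \<tau> (P * u * M (\<eta> (E (Q * v)))) = \<tau> (P * M (\<eta>' (E Q)))"
    and cau: "l2_cauchy \<tau> x"
    and J: "\<forall>Zs. set Zs \<subseteq> S \<longrightarrow> tau_L2 \<tau> (prod_list Zs) x = rhs M E \<tau> X (insert X Cs) \<eta> Zs"
  shows "\<forall>Zs. set Zs \<subseteq> S \<longrightarrow> tau_L2 \<tau> (prod_list Zs) (\<lambda>k. u * v * x k) = rhs M E \<tau> X (insert X Cs) \<eta>' Zs"
proof (intro allI impI)
  fix Zs assume Zs: "set Zs \<subseteq> S"
  let ?VS = "insert X Cs"
  let ?P = "\<lambda>k. subprod Zs (\<lambda>p. p \<notin> Vs ?VS Zs k \<and> p \<noteq> k)"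
  let ?Q = "\<lambda>k. subprod Zs (\<lambda>p. p \<in> Vs ?VS Zs k)"
  have lf: "clinear_functional \<tau>" and t1: "\<tau> 1 = 1" using st unfolding cstate_def by auto
  have one: "(1::'a) \<noteq> 0" using t1 clf_zero[OF lf] by auto
  have Qin: "?Q k \<in> Ac" for k
    by (rule subprod_in2[OF Ac1 Acm]) (use AcX in \<open>auto simp: Vs_def\<close>)
  have R': "rhs M E \<tau> X ?VS \<eta>' Zs = (\<Sum>k\<in>Xpos X Zs. \<tau> (?P k * u * M (\<eta> (E (?Q k * v)))))"
    unfolding rhs_def using K Qin by (intro sum.cong) auto
  have tl: "tau_L2 \<tau> (prod_list Zs) (\<lambda>k. u * v * x k) = lim (\<lambda>k. \<tau> (prod_list Zs * (u * v) * x k))"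
    unfolding tau_L2_def by (simp only: mult.assoc)
  have S_sub: "Cs \<subseteq> S" "Os \<subseteq> S" using SS by auto
  show "tau_L2 \<tau> (prod_list Zs) (\<lambda>k. u * v * x k) = rhs M E \<tau> X ?VS \<eta>' Zs"
  proof (cases "u = 0 \<or> v = 0")
    case True
    have l: "tau_L2 \<tau> (prod_list Zs) (\<lambda>k. u * v * x k) = 0"
    proof -
      have "(\<lambda>k. \<tau> (prod_list Zs * (u * v) * x k)) = (\<lambda>k. 0)"
        using True by (auto simp: clf_zero[OF lf])
      then show ?thesis unfolding tl by (simp add: limI)
    qed
    have "\<tau> (?P k * u * M (\<eta> (E (?Q k * v)))) = 0" for k
      using True by (auto simp: clf_zero[OF lf] clinear_zero[OF linE] clinear_zero[OF lineta] clinear_zero[OF linM])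
    then show ?thesis unfolding l R' by simp
  next
    case False
    then have u0: "u \<noteq> 0" and v0: "v \<noteq> 0" by auto
    show ?thesis
    proof (cases "u \<in> Cs")
      case uC: False
      define s :: complex where "s = (if u = X then 2 else 1)"
      have s0: "s \<noteq> 0" unfolding s_def by auto
      have suX: "cscale s u \<noteq> X"
        using cscale_inj[OF u0, of 2 1] unfolding s_def by (auto simp: cscale_one)
      have suC: "cscale s u \<notin> Cs" using usa_cscale_iff[OF Cs s0] uC by blast
      define w where "w = cscale (1/s) v"
      have wC: "w \<in> Cs" unfolding w_def by (rule usa_cscale[OF Cs vC])
      have w0: "w \<noteq> 0" using usa_cscale_iff[OF Cs s0] v0 cscale_pair[OF s0, of 1 v] unfolding w_def by auto
      obtain T2 where T2: "set T2 \<subseteq> Cs" "X \<notin> set T2" "prod_list T2 = w"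
        using rep_X_free[OF Cs wC w0 one] by blast
      let ?W = "[] @ Zs @ [cscale s u] @ T2"
      have Wsub: "set ?W \<subseteq> S" using Zs T2(1) S_sub usa_cscale[OF Os uO] by auto
      have pW: "prod_list ?W = prod_list Zs * (u * v)"
        using T2(3) cscale_pair[OF s0, of u v] unfolding w_def by (simp add: mult.assoc)
      have "tau_L2 \<tau> (prod_list Zs) (\<lambda>k. u * v * x k) = tau_L2 \<tau> (prod_list ?W) x"
        unfolding tau_L2_def pW by (simp only: mult.assoc)
      also have "\<dots> = rhs M E \<tau> X ?VS \<eta> ?W" using J Wsub by blast
      also have "\<dots> = (\<Sum>k\<in>Xpos X Zs. \<tau> (prod_list [] * ?P k * prod_list [cscale s u] * M (\<eta> (E (?Q k * prod_list T2)))))"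
        by (rule rhs_append) (use T2 suX suC in auto)
      also have "\<dots> = (\<Sum>k\<in>Xpos X Zs. \<tau> (?P k * u * M (\<eta> (E (?Q k * v)))))"
      proof (rule sum.cong[OF refl])
        fix k show "\<tau> (prod_list [] * ?P k * prod_list [cscale s u] * M (\<eta> (E (?Q k * prod_list T2)))) = \<tau> (?P k * u * M (\<eta> (E (?Q k * v))))"
          using K_scale[OF linE lineta linM s0, of \<tau> "?P k" u "?Q k" v] T2(3) unfolding w_def by simp
      qed
      finally show ?thesis using R' by simp
    next
      case uC: True
      show ?thesis
      proof (cases "\<exists>c\<in>Os. c \<notin> Cs")
        case True
        then obtain c where cO: "c \<in> Os" and cC: "c \<notin> Cs" by blast
        have c0: "c \<noteq> 0" using cC usa_zero[OF Cs] by auto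
        have inj1: "s = t" if "cscale s c = X" "cscale t c = X" for s t
          using cscale_inj[OF c0, of s t] that by simp
        have inj2: "s = t" if "u + cscale s c = X" "u + cscale t c = X" for s t
          using cscale_inj[OF c0, of s t] that by (metis add_left_cancel)
        have "\<exists>s::complex. s \<noteq> 0 \<and> cscale s c \<noteq> X \<and> u + cscale s c \<noteq> X"
        proof (rule ccontr)
          assume "\<not> ?thesis"
          then have b: "cscale s c = X \<or> u + cscale s c = X" if "s \<noteq> 0" for s :: complex
            using that by blast
          from b[of 1] b[of 2] b[of 3] show False
            using inj1[of 1 2] inj1[of 1 3] inj1[of 2 3] inj2[of 1 2] inj2[of 1 3] inj2[of 2 3] by auto
        qed
        then obtain s :: complex where s0: "s \<noteq> 0" and scX: "cscale s c \<noteq> X" and uscX: "u + cscale s c \<noteq> X"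
          by blast
        have scC: "cscale s c \<notin> Cs" using usa_cscale_iff[OF Cs s0] cC by blast
        have uscC: "u + cscale s c \<notin> Cs"
        proof
          assume "u + cscale s c \<in> Cs"
          then have "u + cscale s c - u \<in> Cs" using usa_diff[OF Cs _ uC] by blast
          then show False using scC by simp
        qed
        have scO: "cscale s c \<in> Os" by (rule usa_cscale[OF Os cO])
        have uscO: "u + cscale s c \<in> Os" by (rule usa_add[OF Os uO scO])
        obtain T2 where T2: "set T2 \<subseteq> Cs" "X \<notin> set T2" "prod_list T2 = v"
          using rep_X_free[OF Cs vC v0 one] by blast
        let ?W1 = "[] @ Zs @ [u + cscale s c] @ T2"
        let ?W2 = "[] @ Zs @ [cscale s c] @ T2"
        have W1sub: "set ?W1 \<subseteq> S" using Zs T2(1) S_sub uscO by auto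
        have W2sub: "set ?W2 \<subseteq> S" using Zs T2(1) S_sub scO by auto
        have seq: "\<tau> (prod_list Zs * (u * v * x k)) = \<tau> (prod_list ?W1 * x k) - \<tau> (prod_list ?W2 * x k)" for k
        proof -
          have "prod_list Zs * (u * v * x k) = prod_list ?W1 * x k - prod_list ?W2 * x k"
            using T2(3) by (simp add: algebra_simps)
          then show ?thesis by (simp add: clf_diff[OF lf])
        qed
        have c1: "convergent (\<lambda>k. \<tau> (prod_list ?W1 * x k))" by (rule tau_conv[OF st bnd cau])
        have c2: "convergent (\<lambda>k. \<tau> (prod_list ?W2 * x k))" by (rule tau_conv[OF st bnd cau])
        have "tau_L2 \<tau> (prod_list Zs) (\<lambda>k. u * v * x k) = tau_L2 \<tau> (prod_list ?W1) x - tau_L2 \<tau> (prod_list ?W2) x"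
          unfolding tau_L2_def seq
          by (rule limI) (intro tendsto_diff convergent_LIMSEQ_iff[THEN iffD1] c1 c2)
        also have "\<dots> = rhs M E \<tau> X ?VS \<eta> ?W1 - rhs M E \<tau> X ?VS \<eta> ?W2"
          using J W1sub W2sub by presburger
        also have "rhs M E \<tau> X ?VS \<eta> ?W1 = (\<Sum>k\<in>Xpos X Zs. \<tau> (prod_list [] * ?P k * prod_list [u + cscale s c] * M (\<eta> (E (?Q k * prod_list T2)))))"
          by (rule rhs_append) (use T2 uscX uscC in auto)
        also have "rhs M E \<tau> X ?VS \<eta> ?W2 = (\<Sum>k\<in>Xpos X Zs. \<tau> (prod_list [] * ?P k * prod_list [cscale s c] * M (\<eta> (E (?Q k * prod_list T2)))))"
          by (rule rhs_append) (use T2 scX scC in auto)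
        also have "(\<Sum>k\<in>Xpos X Zs. \<tau> (prod_list [] * ?P k * prod_list [u + cscale s c] * M (\<eta> (E (?Q k * prod_list T2)))))
           - (\<Sum>k\<in>Xpos X Zs. \<tau> (prod_list [] * ?P k * prod_list [cscale s c] * M (\<eta> (E (?Q k * prod_list T2)))))
           = (\<Sum>k\<in>Xpos X Zs. \<tau> (?P k * u * M (\<eta> (E (?Q k * v)))))"
          unfolding sum_subtractf[symmetric]
        proof (rule sum.cong[OF refl])
          fix k
          have "?P k * (u + cscale s c) * M (\<eta> (E (?Q k * v))) - ?P k * cscale s c * M (\<eta> (E (?Q k * v)))
              = ?P k * u * M (\<eta> (E (?Q k * v)))" by (simp add: algebra_simps)
          then show "\<tau> (prod_list [] * ?P k * prod_list [u + cscale s c] * M (\<eta> (E (?Q k * prod_list T2)))) -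
              \<tau> (prod_list [] * ?P k * prod_list [cscale s c] * M (\<eta> (E (?Q k * prod_list T2)))) =
              \<tau> (?P k * u * M (\<eta> (E (?Q k * v))))"
            using T2(3) by (simp add: clf_diff[OF lf, symmetric])
        qed
        finally show ?thesis using R' by simp
      next
        case False
        then have OC: "Os \<subseteq> Cs" by blast
        have SAc: "S \<subseteq> Ac" using SS OC AcX by auto
        define s :: complex where "s = (if u = X then 2 else 1)"
        have s0: "s \<noteq> 0" unfolding s_def by auto
        have suX: "cscale s u \<noteq> X"
          using cscale_inj[OF u0, of 2 1] unfolding s_def by (auto simp: cscale_one)
        define w where "w = cscale (1/s) v"
        have wC: "w \<in> Cs" unfolding w_def by (rule usa_cscale[OF Cs vC])
        have w0: "w \<noteq> 0" using usa_cscale_iff[OF Cs s0] v0 cscale_pair[OF s0, of 1 v] unfolding w_def by auto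
        obtain T2 where T2: "set T2 \<subseteq> Cs" "X \<notin> set T2" "prod_list T2 = w"
          using rep_X_free[OF Cs wC w0 one] by blast
        have com: "cscale s u * a = a * cscale s u" if "a \<in> Ac" for a
          using ucomm that by (simp add: cscale_mult_left cscale_mult_right)
        have ZAc: "prod_list Zs \<in> Ac" by (rule prod_list_in[OF Ac1 Acm]) (use Zs SAc in auto)
        have PAc: "?P k \<in> Ac" for k by (rule subprod_in[OF Ac1 Acm]) (use Zs SAc in auto)
        let ?W = "[cscale s u] @ Zs @ [] @ T2"
        have Wsub: "set ?W \<subseteq> S" using Zs T2(1) S_sub usa_cscale[OF Os uO] by auto
        have pW: "prod_list ?W = prod_list Zs * (u * v)"
        proof -
          have "prod_list ?W = cscale s u * prod_list Zs * w" using T2(3) by (simp add: mult.assoc)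
          also have "\<dots> = prod_list Zs * (cscale s u * w)" using com[OF ZAc] by (simp add: mult.assoc)
          also have "\<dots> = prod_list Zs * (u * v)" unfolding w_def cscale_pair[OF s0] ..
          finally show ?thesis .
        qed
        have "tau_L2 \<tau> (prod_list Zs) (\<lambda>k. u * v * x k) = tau_L2 \<tau> (prod_list ?W) x"
          unfolding tau_L2_def pW by (simp only: mult.assoc)
        also have "\<dots> = rhs M E \<tau> X ?VS \<eta> ?W" using J Wsub by blast
        also have "\<dots> = (\<Sum>k\<in>Xpos X Zs. \<tau> (prod_list [cscale s u] * ?P k * prod_list [] * M (\<eta> (E (?Q k * prod_list T2)))))"
          by (rule rhs_append) (use T2 suX in auto)
        also have "\<dots> = (\<Sum>k\<in>Xpos X Zs. \<tau> (?P k * u * M (\<eta> (E (?Q k * v)))))"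
        proof (rule sum.cong[OF refl])
          fix k
          have "prod_list [cscale s u] * ?P k * prod_list [] = ?P k * cscale s u"
            using com[OF PAc] by simp
          then show "\<tau> (prod_list [cscale s u] * ?P k * prod_list [] * M (\<eta> (E (?Q k * prod_list T2)))) = \<tau> (?P k * u * M (\<eta> (E (?Q k * v))))"
            using K_scale[OF linE lineta linM s0, of \<tau> "?P k" u "?Q k" v] T2(3) unfolding w_def by simp
        qed
        finally show ?thesis using R' by simp
      qed
    qed
  qed
qed




theorem proposition5p8:
  fixes L R :: "'b::star_cmplx_alg \<Rightarrow> 'a::star_cmplx_alg"
    and E :: "'a \<Rightarrow> 'b" and \<tau> :: "'a \<Rightarrow> complex"
    and Cl Cr :: "'a set" and \<eta> :: "'b \<Rightarrow> 'b" and b1 b2 :: 'b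
  assumes "analytical L R E \<tau>"
    and "B_pair L R Cl Cr"
    and "cp_on UNIV \<eta>"
  shows "(\<forall>X \<xi>. X \<in> A_left R \<longrightarrow> is_J_left L E \<tau> X Cl Cr \<eta> \<xi> \<longrightarrow>
            cp_on UNIV (\<lambda>b. \<eta> (b * b2) * b1) \<longrightarrow>
            is_J_left L E \<tau> X Cl Cr (\<lambda>b. \<eta> (b * b2) * b1) (\<lambda>k. R b1 * L b2 * \<xi> k))
       \<and> (\<forall>Y \<nu>. Y \<in> A_right L \<longrightarrow> is_J_right R E \<tau> Y Cl Cr \<eta> \<nu> \<longrightarrow>
            cp_on UNIV (\<lambda>b. b2 * \<eta> (b1 * b)) \<longrightarrow>
            is_J_right R E \<tau> Y Cl Cr (\<lambda>b. b2 * \<eta> (b1 * b)) (\<lambda>k. R b1 * L b2 * \<nu> k))"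
proof -
  have bb: "bb_ncps L R E" and st: "cstate \<tau>"
    and tE: "\<And>a. \<tau> a = \<tau> (L (E a))"
    and bnd: "\<forall>a. \<exists>C. \<forall>x. Re (\<tau> (adj (a * x) * (a * x))) \<le> C * Re (\<tau> (adj x * x))"
    using assms(1) unfolding analytical_def by auto
  have hL: "star_hom L" and hR: "star_antihom R" and LR: "\<And>b c. L b * R c = R c * L b"
    and linE: "clinear E" and EM: "\<And>b1 b2 a. E (L b1 * R b2 * a) = b1 * E a * b2"
    and ELR: "\<And>a b. E (a * L b) = E (a * R b)"
    using bb unfolding bb_ncps_def by auto
  have linL: "clinear L" and L1: "L 1 = 1" and Lm: "\<And>x y. L (x * y) = L x * L y"
    using hL unfolding star_hom_def by auto
  have linR: "clinear R" and R1: "R 1 = 1" and Rm: "\<And>x y. R (x * y) = R y * R x"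
    using hR unfolding star_antihom_def by auto
  have linEta: "clinear \<eta>" using assms(3) unfolding cp_on_def by auto
  have Cl: "unital_subalg Cl" and Cr: "unital_subalg Cr" and rL: "range L \<subseteq> Cl" and rR: "range R \<subseteq> Cr"
    and ClA: "Cl \<subseteq> A_left R" and CrA: "Cr \<subseteq> A_right L"
    using assms(2) unfolding B_pair_def by auto
  have tLR: "\<tau> (w * R b) = \<tau> (w * L b)" for w b
    using tE[of "w * R b"] tE[of "w * L b"] ELR[of w b] by simp
  have Al1: "1 \<in> A_left R" and Alm: "\<forall>a\<in>A_left R. \<forall>b\<in>A_left R. a * b \<in> A_left R"
    unfolding A_left_def by (auto simp: mult.assoc) (metis mult.assoc)
  have Ar1: "1 \<in> A_right L" and Arm: "\<forall>a\<in>A_right L. \<forall>b\<in>A_right L. a * b \<in> A_right L"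
    unfolding A_right_def by (auto simp: mult.assoc) (metis mult.assoc)
  have part1: "is_J_left L E \<tau> X Cl Cr (\<lambda>b. \<eta> (b * b2) * b1) (\<lambda>k. R b1 * L b2 * \<xi> k)"
    if XA: "X \<in> A_left R" and J: "is_J_left L E \<tau> X Cl Cr \<eta> \<xi>" for X \<xi>
  proof -
    have cau: "l2_cauchy \<tau> \<xi>" and gen: "\<And>k. \<xi> k \<in> gen_alg (insert X (Cl \<union> Cr))"
      and mom: "\<forall>Zs. set Zs \<subseteq> insert X (Cl \<union> Cr) \<longrightarrow> tau_L2 \<tau> (prod_list Zs) \<xi> = rhs L E \<tau> X (insert X Cl) \<eta> Zs"
      using J unfolding is_J_left_alt by auto
    have K: "\<forall>P. \<forall>Q\<in>A_left R. \<tau> (P * R b1 * L (\<eta> (E (Q * L b2)))) = \<tau> (P * L (\<eta> (E Q * b2) * b1))"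
    proof (intro allI ballI)
      fix P Q assume Q: "Q \<in> A_left R"
      have "E (Q * L b2) = E (Q * R b2)" by (rule ELR)
      also have "\<dots> = E (L 1 * R b2 * Q)" using Q unfolding A_left_def by (simp add: L1)
      also have "\<dots> = E Q * b2" by (simp add: EM)
      finally have e: "E (Q * L b2) = E Q * b2" .
      define d where "d = \<eta> (E Q * b2)"
      have "\<tau> (P * R b1 * L d) = \<tau> ((P * L d) * R b1)" by (simp add: mult.assoc LR)
      also have "\<dots> = \<tau> ((P * L d) * L b1)" by (rule tLR)
      also have "\<dots> = \<tau> (P * L (d * b1))" by (simp add: mult.assoc Lm)
      finally show "\<tau> (P * R b1 * L (\<eta> (E (Q * L b2)))) = \<tau> (P * L (\<eta> (E Q * b2) * b1))"
        unfolding e d_def .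
    qed
    have mom': "\<forall>Zs. set Zs \<subseteq> insert X (Cl \<union> Cr) \<longrightarrow> tau_L2 \<tau> (prod_list Zs) (\<lambda>k. R b1 * L b2 * \<xi> k)
        = rhs L E \<tau> X (insert X Cl) (\<lambda>b. \<eta> (b * b2) * b1) Zs"
      by (rule generic[OF st bnd linE linEta linL Cl Cr refl _ Al1 Alm _ _ _ K cau mom])
         (use XA ClA rL rR in \<open>auto simp: A_left_def\<close>)
    have gen': "R b1 * L b2 * \<xi> k \<in> gen_alg (insert X (Cl \<union> Cr))" for k
      by (rule gen_mult[OF gen_mult[OF gen_base gen_base] gen[of k]]) (use rL rR in auto)
    show ?thesis unfolding is_J_left_alt
      using l2_cauchy_mult[OF st bnd cau, of "R b1 * L b2"] gen' mom' by auto
  qed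
  have part2: "is_J_right R E \<tau> Y Cl Cr (\<lambda>b. b2 * \<eta> (b1 * b)) (\<lambda>k. R b1 * L b2 * \<nu> k)"
    if YA: "Y \<in> A_right L" and J: "is_J_right R E \<tau> Y Cl Cr \<eta> \<nu>" for Y \<nu>
  proof -
    have cau: "l2_cauchy \<tau> \<nu>" and gen: "\<And>k. \<nu> k \<in> gen_alg (insert Y (Cl \<union> Cr))"
      and mom: "\<forall>Zs. set Zs \<subseteq> insert Y (Cl \<union> Cr) \<longrightarrow> tau_L2 \<tau> (prod_list Zs) \<nu> = rhs R E \<tau> Y (insert Y Cr) \<eta> Zs"
      using J unfolding is_J_right_alt by auto
    have K: "\<forall>P. \<forall>Q\<in>A_right L. \<tau> (P * L b2 * R (\<eta> (E (Q * R b1)))) = \<tau> (P * R (b2 * \<eta> (b1 * E Q)))"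
    proof (intro allI ballI)
      fix P Q assume Q: "Q \<in> A_right L"
      have "E (Q * R b1) = E (Q * L b1)" by (rule ELR[symmetric])
      also have "\<dots> = E (L b1 * R 1 * Q)" using Q unfolding A_right_def by (simp add: R1)
      also have "\<dots> = b1 * E Q" by (simp add: EM)
      finally have e: "E (Q * R b1) = b1 * E Q" .
      define d where "d = \<eta> (b1 * E Q)"
      have "\<tau> (P * L b2 * R d) = \<tau> ((P * R d) * L b2)" by (simp add: mult.assoc LR)
      also have "\<dots> = \<tau> ((P * R d) * R b2)" by (rule tLR[symmetric])
      also have "\<dots> = \<tau> (P * R (b2 * d))" by (simp add: mult.assoc Rm)
      finally show "\<tau> (P * L b2 * R (\<eta> (E (Q * R b1)))) = \<tau> (P * R (b2 * \<eta> (b1 * E Q)))"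
        unfolding e d_def .
    qed
    have SS: "insert Y (Cl \<union> Cr) = insert Y (Cr \<union> Cl)" by auto
    have mom1: "\<forall>Zs. set Zs \<subseteq> insert Y (Cl \<union> Cr) \<longrightarrow> tau_L2 \<tau> (prod_list Zs) (\<lambda>k. L b2 * R b1 * \<nu> k)
        = rhs R E \<tau> Y (insert Y Cr) (\<lambda>b. b2 * \<eta> (b1 * b)) Zs"
      by (rule generic[OF st bnd linE linEta linR Cr Cl SS _ Ar1 Arm _ _ _ K cau mom])
         (use YA CrA rL rR in \<open>auto simp: A_right_def\<close>)
    have seq: "(\<lambda>k. L b2 * R b1 * \<nu> k) = (\<lambda>k. R b1 * L b2 * \<nu> k)" by (simp add: LR)
    have gen': "R b1 * L b2 * \<nu> k \<in> gen_alg (insert Y (Cl \<union> Cr))" for k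
      by (rule gen_mult[OF gen_mult[OF gen_base gen_base] gen[of k]]) (use rL rR in auto)
    show ?thesis unfolding is_J_right_alt
      using l2_cauchy_mult[OF st bnd cau, of "R b1 * L b2"] gen' mom1 unfolding seq by auto
  qed
  show ?thesis using part1 part2 by blast
qed


end
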